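(* Let $\alpha,\beta:[0,1]\to X$ be paths from $x_0$ to $x_1$ and let $A$ be a homotopy cut-set for $\alpha$ and $\beta$. (1) If $x_0\notin\mathbf{aw}(X)$, there is a homotopy cut-set $B\subseteq A$ for $\alpha,\beta$ in which $0$ is an isolated point. (2) If $x_1\notin\mathbf{aw}(X)$, there is a homotopy cut-set $B\subseteq A$ for $\alpha,\beta$ in which $1$ is an isolated point. (3) If $x_0,x_1\notin\mathbf{aw}(X)$, there is a homotopy cut-set $B\subseteq A$ for $\alpha,\beta$ in which both $0$ and $1$ are isolated points.
   Context: $\simeq$ is path-homotopy. A loop is trivial if path-homotopic to a constant loop. A sequence of loops $\alpha_n$ based at $x$ is a null-sequence if every neighborhood of $x$ contains $\alpha_n([0,1])$ for all but finitely many $n$. $\mathbf{aw}(X)=\{x\in X\mid \text{there is a null-sequence of non-trivial loops based at }x\}$. For paths $\alpha,\beta:[s,t]\to X$, a set $A\subseteq[s,t]$ is a homotopy cut-set for $\alpha,\beta$ if $A$ is closed, nowhere dense, contains $\{s,t\}$, $\alpha|_A=\beta|_A$, and $\alpha|_{[a,b]}\simeq\beta|_{[a,b]}$ for every component $(a,b)$ of $[s,t]\setminus A$. *)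

theory Defs
  imports "HOL-Analysis.Analysis"
begin

text \<open>The space X is modelled as a subset S of a topological space type, with the
subspace topology (S = UNIV gives an arbitrary topological space).\<close>

definition trivial_loop :: "'a::topological_space set \<Rightarrow> (real \<Rightarrow> 'a) \<Rightarrow> bool" where
  "trivial_loop S p \<longleftrightarrow> homotopic_paths S p (\<lambda>t. pathstart p)"

definition null_sequence :: "(nat \<Rightarrow> real \<Rightarrow> 'a::topological_space) \<Rightarrow> 'a \<Rightarrow> bool" where
  "null_sequence \<alpha> x \<longleftrightarrow>
     (\<forall>U. open U \<and> x \<in> U \<longrightarrow> (\<forall>\<^sub>F n in sequentially. path_image (\<alpha> n) \<subseteq> U))"

definition aw :: "'a::topological_space set \<Rightarrow> 'a set" where
  "aw S = {x \<in> S. \<exists>\<alpha>. (\<forall>n. path (\<alpha> n) \<and> path_image (\<alpha> n) \<subseteq> S \<and>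
                         pathstart (\<alpha> n) = x \<and> pathfinish (\<alpha> n) = x \<and>
                         \<not> trivial_loop S (\<alpha> n))
                   \<and> null_sequence \<alpha> x}"

text \<open>Since 0,1 are in A, the components of [0,1] - A
are open intervals {a<..<b}; restriction of a path to [a,b] is reparametrised linearly to [0,1].
Nowhere density of a closed subset of [0,1] is expressed as empty interior
(equivalent to empty interior relative to [0,1]).\<close>

definition homotopy_cut_set ::
  "'a::topological_space set \<Rightarrow> (real \<Rightarrow> 'a) \<Rightarrow> (real \<Rightarrow> 'a) \<Rightarrow> real set \<Rightarrow> bool" where
  "homotopy_cut_set S \<alpha> \<beta> A \<longleftrightarrow>
     A \<subseteq> {0..1} \<and> closed A \<and> interior (closure A) = {} \<and> {0,1} \<subseteq> A \<and>
     (\<forall>t\<in>A. \<alpha> t = \<beta> t) \<and>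
     (\<forall>a b. a < b \<and> {a<..<b} \<in> components ({0..1} - A) \<longrightarrow>
        homotopic_paths S (\<lambda>t. \<alpha> ((b - a) * t + a)) (\<lambda>t. \<beta> ((b - a) * t + a)))"

definition isolated_point_of :: "real \<Rightarrow> real set \<Rightarrow> bool" where
  "isolated_point_of t B \<longleftrightarrow> t \<in> B \<and> \<not> (t islimpt B)"

end

theory Submission
  imports Defs
begin

lemma pathstart_const [simp]: "pathstart (\<lambda>t. c) = c" by (simp add: pathstart_def)
lemma pathfinish_const [simp]: "pathfinish (\<lambda>t. c) = c" by (simp add: pathfinish_def)
lemma reversepath_const [simp]: "reversepath (\<lambda>t. c) = (\<lambda>t. c)" by (simp add: reversepath_def)

definition sp :: "real \<Rightarrow> real \<Rightarrow> (real \<Rightarrow> 'a) \<Rightarrow> real \<Rightarrow> 'a" where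
  "sp u v g = (\<lambda>x. g ((v - u) * x + u))"

lemma pathstart_sp [simp]: "pathstart (sp u v g) = g u" by (simp add: pathstart_def sp_def)
lemma pathfinish_sp [simp]: "pathfinish (sp u v g) = g v" by (simp add: pathfinish_def sp_def)
lemma reversepath_sp: "reversepath (sp u v g) = sp v u g"
  by (simp add: reversepath_def sp_def algebra_simps)

lemma path_image_subpath_g: "path_image (sp u v g) = g ` closed_segment u v"
  unfolding closed_segment_real_eq path_image_def sp_def by auto

lemma path_subpath_g:
  assumes "path g" "u \<in> {0..1}" "v \<in> {0..1}"
  shows "path (sp u v g)"
proof -
  have sub: "(\<lambda>x. (v - u) * x + u) ` {0..1} \<subseteq> {0..1::real}"
    using closed_segment_subset[OF assms(2,3)] closed_segment_real_eq[of u v] by auto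
  show ?thesis
    unfolding path_def sp_def
    by (rule continuous_on_compose2[OF assms(1)[unfolded path_def]])
       (auto intro!: continuous_intros simp: sub)
qed

lemma path_image_subpath_sub:
  assumes "u \<in> {0..1}" "v \<in> {0..1}"
  shows "path_image (sp u v g) \<subseteq> path_image g"
proof -
  have "g ` closed_segment u v \<subseteq> g ` {0..1}" using closed_segment_subset[OF assms] by (intro image_mono) auto
  then show ?thesis unfolding path_image_subpath_g by (simp add: path_image_def)
qed

lemma hp_rid_c:
  assumes "path p" "path_image p \<subseteq> S"
  shows "homotopic_paths S (p +++ (\<lambda>t. pathfinish p)) p"
proof -
  have \<section>: "continuous_on {0..1} (\<lambda>t::real. if t \<le> 1/2 then 2 *\<^sub>R t else 1)"
    unfolding split_01
    by (rule continuous_on_cases continuous_intros | force simp: pathfinish_def joinpaths_def)+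
  show ?thesis
    apply (rule homotopic_paths_sym)
    using assms unfolding pathfinish_def joinpaths_def
    by (intro \<section> continuous_on_cases continuous_intros homotopic_paths_reparametrize [where f = "\<lambda>t. if t \<le> 1/2 then 2 *\<^sub>R t else 1"]; force)
qed

lemma hp_lid_c:
  assumes "path p" "path_image p \<subseteq> S"
  shows "homotopic_paths S ((\<lambda>t. pathstart p) +++ p) p"
proof -
  have "homotopic_paths S (reversepath p +++ (\<lambda>t. pathstart p)) (reversepath p)"
    using hp_rid_c[of "reversepath p" S] assms by simp
  hence "homotopic_paths S (reversepath (reversepath p +++ (\<lambda>t. pathstart p))) (reversepath (reversepath p))"
    by (rule homotopic_paths_reversepath_D)
  moreover have "reversepath (reversepath p +++ (\<lambda>t. pathstart p)) = (\<lambda>t. pathstart p) +++ p"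
    by (subst reversepath_joinpaths) auto
  ultimately show ?thesis by simp
qed

lemma hp_rinv_c:
  assumes "path p" "path_image p \<subseteq> S"
    shows "homotopic_paths S (p +++ reversepath p) (\<lambda>t. pathstart p)"
proof -
  have p: "continuous_on {0..1} p" 
    using assms by (auto simp: path_def)
  let ?A = "{0..1} \<times> {0..1}"
  have "continuous_on ?A (\<lambda>x. ((\<lambda>s. p (fst x * s)) +++ reversepath ((\<lambda>s. p (fst x * s)))) (snd x))"
    unfolding joinpaths_def reversepath_def path_def
  proof (rule continuous_on_cases_le)
    show "continuous_on {x \<in> ?A. snd x \<le> 1/2} (\<lambda>t. p (fst t * (2 * snd t)))"
         "continuous_on {x \<in> ?A. 1/2 \<le> snd x} (\<lambda>t. p (fst t * (1 - (2 * snd t - 1))))"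
         "continuous_on ?A snd"
      by (intro continuous_on_compose2 [OF p] continuous_intros; auto simp: mult_le_one)+
  qed (auto simp: algebra_simps)
  then show ?thesis
    using assms
    apply (subst homotopic_paths_sym_eq)
    unfolding homotopic_paths_def homotopic_with_def
    apply (rule_tac x="(\<lambda>y. ((\<lambda>s. p (fst y * s)) +++ reversepath((\<lambda>s. p (fst y * s)))) (snd y))" in exI)
    apply (force simp: mult_le_one path_defs joinpaths_def reversepath_def)
    done
qed

lemma hp_linv_c:
  assumes "path p" "path_image p \<subseteq> S"
    shows "homotopic_paths S (reversepath p +++ p) (\<lambda>t. pathfinish p)"
  using hp_rinv_c [of "reversepath p" S] assms by simp

lemma loop_parts_c:
  assumes "path p" "path_image p \<subseteq> S" "path q" "path_image q \<subseteq> S"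
    "pathstart p = pathstart q" "pathfinish p = pathfinish q"
    "homotopic_paths S (p +++ reversepath q) (\<lambda>t. pathstart p)"
  shows "homotopic_paths S p q"
proof -
  have "homotopic_paths S p (p +++ (\<lambda>t. pathfinish p))"
    using hp_rid_c homotopic_paths_sym assms by blast
  also have "homotopic_paths S \<dots> (p +++ (reversepath q +++ q))"
    apply (rule homotopic_paths_join)
    using homotopic_paths_sym[OF hp_linv_c[of q S]] assms by auto
  also have "homotopic_paths S \<dots> ((p +++ reversepath q) +++ q)"
    by (rule homotopic_paths_assoc) (use assms in auto)
  also have "homotopic_paths S \<dots> ((\<lambda>t. pathstart p) +++ q)"
    by (rule homotopic_paths_join) (use assms in auto)
  also have "homotopic_paths S \<dots> q" using hp_lid_c[of q S] assms by simp
  finally show ?thesis .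
qed

lemma cut_remove:
  assumes H: "homotopy_cut_set S \<alpha> \<beta> A" and ab: "a < b" "a \<in> A" "b \<in> A"
    and hab: "homotopic_paths S (sp a b \<alpha>) (sp a b \<beta>)"
  shows "homotopy_cut_set S \<alpha> \<beta> (A - {a<..<b})"
proof -
  have A01: "A \<subseteq> {0..1}" and clA: "closed A" and nd: "interior (closure A) = {}"
    and A0: "{0,1} \<subseteq> A" and eq: "\<forall>t\<in>A. \<alpha> t = \<beta> t"
    and gaps: "\<And>c d. c < d \<Longrightarrow> {c<..<d} \<in> components ({0..1} - A) \<Longrightarrow>
        homotopic_paths S (\<lambda>t. \<alpha> ((d - c) * t + c)) (\<lambda>t. \<beta> ((d - c) * t + c))"
    using H unfolding homotopy_cut_set_def by auto
  let ?B = "A - {a<..<b}"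
  have a01: "0 \<le> a" "a \<le> 1" and b01: "0 \<le> b" "b \<le> 1" using ab A01 by auto
  have clB: "closed ?B" using clA by (intro closed_Diff) auto
  have "interior (closure ?B) \<subseteq> interior (closure A)"
    using clA clB by (simp add: closure_closed interior_mono Diff_subset)
  hence ndB: "interior (closure ?B) = {}" using nd by auto
  have B0: "{0,1} \<subseteq> ?B" using A0 a01 b01 by auto
  have gapsB: "homotopic_paths S (\<lambda>t. \<alpha> ((d - c) * t + c)) (\<lambda>t. \<beta> ((d - c) * t + c))"
    if cd: "c < d" "{c<..<d} \<in> components ({0..1} - ?B)" for c d
  proof (cases "{c<..<d} \<inter> {a<..<b} = {}")
    case False
    have sub: "{a<..<b} \<subseteq> {0..1} - ?B" using a01 b01 by auto
    have "{a<..<b} \<subseteq> {c<..<d}"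
      by (rule components_maximal[OF cd(2) _ sub]) (use False in auto)
    hence "a < b \<longrightarrow> c \<le> a \<and> b \<le> d" by (simp only: greaterThanLessThan_subseteq_greaterThanLessThan)
    hence cab: "c \<le> a" "b \<le> d" using ab(1) by auto
    have CB: "{c<..<d} \<subseteq> {0..1} - ?B" using in_components_subset[OF cd(2)] .
    have "c = a"
    proof (rule ccontr)
      assume "c \<noteq> a" hence "a \<in> {c<..<d}" using cab ab by auto
      thus False using CB ab by auto
    qed
    moreover have "d = b"
    proof (rule ccontr)
      assume "d \<noteq> b" hence "b \<in> {c<..<d}" using cab ab by auto
      thus False using CB ab by auto
    qed
    ultimately show ?thesis using hab by (simp add: sp_def)
  next
    case True
    have CB: "{c<..<d} \<subseteq> {0..1} - ?B" using in_components_subset[OF cd(2)] .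
    have CA: "{c<..<d} \<subseteq> {0..1} - A"
    proof
      fix x assume x: "x \<in> {c<..<d}"
      hence "x \<notin> {a<..<b}" using True by blast
      thus "x \<in> {0..1} - A" using CB x by blast
    qed
    have ne: "{c<..<d} \<noteq> {}" using cd(1) by simp
    have ne2: "{0..1} - A \<noteq> {}" using ne CA by blast
    obtain C' where C': "C' \<in> components ({0..1} - A)" "{c<..<d} \<subseteq> C'"
      using exists_component_superset[OF CA ne2 connected_Ioo] by blast
    have s1: "C' \<subseteq> {0..1} - ?B" using in_components_subset[OF C'(1)] by blast
    have s2: "{c<..<d} \<inter> C' \<noteq> {}" using C'(2) ne by blast
    have "C' \<subseteq> {c<..<d}"
      by (rule components_maximal[OF cd(2) in_components_connected[OF C'(1)] s1 s2])
    hence "C' = {c<..<d}" using C'(2) by blast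
    hence "{c<..<d} \<in> components ({0..1} - A)" using C'(1) by simp
    thus ?thesis by (rule gaps[OF cd(1)])
  qed
  show ?thesis unfolding homotopy_cut_set_def
  proof (intro conjI allI impI)
    show "?B \<subseteq> {0..1}" using A01 by blast
    show "closed ?B" by (rule clB)
    show "interior (closure ?B) = {}" by (rule ndB)
    show "{0,1} \<subseteq> ?B" by (rule B0)
    show "\<forall>t\<in>?B. \<alpha> t = \<beta> t" using eq by blast
  next
    fix c d assume "c < d \<and> {c<..<d} \<in> components ({0..1} - ?B)"
    thus "homotopic_paths S (\<lambda>t. \<alpha> ((d - c) * t + c)) (\<lambda>t. \<beta> ((d - c) * t + c))"
      using gapsB by blast
  qed
qed

lemma loops_lemma:
  assumes pa: "path \<alpha>" "path_image \<alpha> \<subseteq> S" and pb: "path \<beta>" "path_image \<beta> \<subseteq> S"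
    and c: "c \<in> {0..1}" "\<alpha> c = \<beta> c"
    and f: "\<And>n. f n \<in> {0..1}" "\<And>n. \<alpha> (f n) = \<beta> (f n)" "f \<longlonglongrightarrow> c"
    and naw: "\<alpha> c \<notin> aw S"
  shows "\<exists>n. homotopic_paths S (sp c (f n) \<alpha>) (sp c (f n) \<beta>)"
proof (rule ccontr)
  assume nh: "\<not> ?thesis"
  define \<gamma> where "\<gamma> n = sp c (f n) \<alpha> +++ reversepath (sp c (f n) \<beta>)" for n
  have pn: "path (sp c (f n) \<alpha>)" "path (sp c (f n) \<beta>)" for n
    using path_subpath_g[OF pa(1) c(1) f(1)] path_subpath_g[OF pb(1) c(1) f(1)] by auto
  have imn: "path_image (sp c (f n) \<alpha>) \<subseteq> S" "path_image (sp c (f n) \<beta>) \<subseteq> S" for n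
    using path_image_subpath_sub[OF c(1) f(1)] pa pb by blast+
  have xS: "\<alpha> c \<in> S" using pa c(1) unfolding path_image_def by auto
  have props: "path (\<gamma> n) \<and> path_image (\<gamma> n) \<subseteq> S \<and> pathstart (\<gamma> n) = \<alpha> c \<and>
      pathfinish (\<gamma> n) = \<alpha> c \<and> \<not> trivial_loop S (\<gamma> n)" for n
  proof (intro conjI)
    show "path (\<gamma> n)" unfolding \<gamma>_def using pn f by (auto intro!: path_join_imp)
    show "path_image (\<gamma> n) \<subseteq> S" unfolding \<gamma>_def
      using path_image_join_subset imn by (fastforce simp: path_image_reversepath)
    show ps: "pathstart (\<gamma> n) = \<alpha> c" unfolding \<gamma>_def by simp
    show "pathfinish (\<gamma> n) = \<alpha> c" unfolding \<gamma>_def using c by simp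
    show "\<not> trivial_loop S (\<gamma> n)"
    proof
      assume "trivial_loop S (\<gamma> n)"
      hence "homotopic_paths S (\<gamma> n) (\<lambda>t. \<alpha> c)" unfolding trivial_loop_def ps .
      hence h: "homotopic_paths S (sp c (f n) \<alpha> +++ reversepath (sp c (f n) \<beta>)) (\<lambda>t. pathstart (sp c (f n) \<alpha>))"
        unfolding \<gamma>_def by simp
      have "homotopic_paths S (sp c (f n) \<alpha>) (sp c (f n) \<beta>)"
        by (rule loop_parts_c[OF pn(1) imn(1) pn(2) imn(2) _ _ h]) (simp_all add: c(2) f(2))
      thus False using nh by blast
    qed
  qed
  have null: "null_sequence \<gamma> (\<alpha> c)"
    unfolding null_sequence_def
  proof (intro allI impI)
    fix U :: "'a set" assume U: "open U \<and> \<alpha> c \<in> U"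
    have ca: "\<forall>x\<in>{0..1}. \<forall>B. open B \<longrightarrow> \<alpha> x \<in> B \<longrightarrow> (\<exists>A. open A \<and> x \<in> A \<and> (\<forall>y\<in>{0..1}. y \<in> A \<longrightarrow> \<alpha> y \<in> B))"
      using pa(1) unfolding path_def continuous_on_topological .
    have cb: "\<forall>x\<in>{0..1}. \<forall>B. open B \<longrightarrow> \<beta> x \<in> B \<longrightarrow> (\<exists>A. open A \<and> x \<in> A \<and> (\<forall>y\<in>{0..1}. y \<in> A \<longrightarrow> \<beta> y \<in> B))"
      using pb(1) unfolding path_def continuous_on_topological .
    have bU: "\<beta> c \<in> U" using U c(2) by simp
    have "\<exists>A. open A \<and> c \<in> A \<and> (\<forall>y\<in>{0..1}. y \<in> A \<longrightarrow> \<alpha> y \<in> U)"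
      using ca c(1) U by blast
    then obtain A1 where A1: "open A1" "c \<in> A1" "\<And>y. y \<in> {0..1} \<Longrightarrow> y \<in> A1 \<Longrightarrow> \<alpha> y \<in> U"
      by blast
    have "\<exists>A. open A \<and> c \<in> A \<and> (\<forall>y\<in>{0..1}. y \<in> A \<longrightarrow> \<beta> y \<in> U)"
      using cb c(1) U bU by blast
    then obtain A2 where A2: "open A2" "c \<in> A2" "\<And>y. y \<in> {0..1} \<Longrightarrow> y \<in> A2 \<Longrightarrow> \<beta> y \<in> U"
      by blast
    obtain e where e: "e > 0" "ball c e \<subseteq> A1 \<inter> A2"
      using open_contains_ball[of "A1 \<inter> A2"] A1 A2 by blast
    have ev: "\<forall>\<^sub>F n in sequentially. dist (f n) c < e"
      using f(3) e(1) by (rule tendstoD)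
    show "\<forall>\<^sub>F n in sequentially. path_image (\<gamma> n) \<subseteq> U"
      using ev
    proof (rule eventually_mono)
      fix n assume dn: "dist (f n) c < e"
      have seg: "closed_segment c (f n) \<subseteq> {0..1} \<inter> ball c e"
      proof
        fix y assume y: "y \<in> closed_segment c (f n)"
        have "y \<in> {0..1}" using closed_segment_subset[OF c(1) f(1)[of n]] y by blast
        moreover have "dist y c < e" using segment_bound(1)[OF y] dn by (simp add: dist_norm)
        ultimately show "y \<in> {0..1} \<inter> ball c e" by (simp add: dist_commute)
      qed
      have "path_image (sp c (f n) \<alpha>) \<subseteq> U"
        unfolding path_image_subpath_g using seg e A1 by blast
      moreover have "path_image (sp c (f n) \<beta>) \<subseteq> U"
        unfolding path_image_subpath_g using seg e A2 by blast
      ultimately show "path_image (\<gamma> n) \<subseteq> U"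
        unfolding \<gamma>_def using path_image_join_subset by (fastforce simp: path_image_reversepath)
    qed
  qed
  have "\<alpha> c \<in> aw S" unfolding aw_def using xS props null by blast
  thus False using naw by contradiction
qed


lemma cut_zero:
  assumes pa: "path \<alpha>" "path_image \<alpha> \<subseteq> S" and pb: "path \<beta>" "path_image \<beta> \<subseteq> S"
    and H: "homotopy_cut_set S \<alpha> \<beta> A" and naw: "\<alpha> 0 \<notin> aw S"
  shows "\<exists>B\<subseteq>A. homotopy_cut_set S \<alpha> \<beta> B \<and> isolated_point_of 0 B"
proof -
  from H have A01: "A \<subseteq> {0..1}" and eqA: "\<forall>t\<in>A. \<alpha> t = \<beta> t" and A0: "0 \<in> A"
    unfolding homotopy_cut_set_def by auto
  show ?thesis
  proof (cases "0 islimpt A")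
    case False
    then show ?thesis using H A0 unfolding isolated_point_of_def by blast
  next
    case True
    obtain f where f: "\<And>n. f n \<in> A - {0}" "f \<longlonglongrightarrow> 0" using True islimpt_sequential by blast
    have "f n \<in> {0..1}" for n using f(1)[of n] A01 by blast
    have "\<exists>n. homotopic_paths S (sp 0 (f n) \<alpha>) (sp 0 (f n) \<beta>)"
      by (rule loops_lemma[OF pa pb _ _ _ _ f(2) naw]) (use f A01 eqA A0 \<open>\<And>n. f n \<in> {0..1}\<close> in auto)
    then obtain n where hn: "homotopic_paths S (sp 0 (f n) \<alpha>) (sp 0 (f n) \<beta>)" by blast
    have t: "f n \<in> A" "0 < f n" using f(1)[of n] A01 by force+
    have cs: "homotopy_cut_set S \<alpha> \<beta> (A - {0<..<f n})" by (rule cut_remove[OF H t(2) A0 t(1) hn])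
    have iso: "isolated_point_of 0 (A - {0<..<f n})"
      unfolding isolated_point_of_def islimpt_approachable
    proof (intro conjI notI)
      show "0 \<in> A - {0<..<f n}" using A0 by auto
    next
      assume "\<forall>e>0. \<exists>x'\<in>A - {0<..<f n}. x' \<noteq> 0 \<and> dist x' 0 < e"
      then obtain x' where x': "x' \<in> A - {0<..<f n}" "x' \<noteq> 0" "dist x' 0 < f n" using t(2) by blast
      have "0 \<le> x'" using x'(1) A01 by auto
      thus False using x' by (auto simp: dist_real_def)
    qed
    show ?thesis using cs iso by blast
  qed
qed

lemma cut_one:
  assumes pa: "path \<alpha>" "path_image \<alpha> \<subseteq> S" and pb: "path \<beta>" "path_image \<beta> \<subseteq> S"
    and H: "homotopy_cut_set S \<alpha> \<beta> A" and naw: "\<alpha> 1 \<notin> aw S"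
  shows "\<exists>B\<subseteq>A. homotopy_cut_set S \<alpha> \<beta> B \<and> isolated_point_of 1 B"
proof -
  from H have A01: "A \<subseteq> {0..1}" and eqA: "\<forall>t\<in>A. \<alpha> t = \<beta> t" and A1: "1 \<in> A"
    unfolding homotopy_cut_set_def by auto
  show ?thesis
  proof (cases "1 islimpt A")
    case False
    then show ?thesis using H A1 unfolding isolated_point_of_def by blast
  next
    case True
    obtain f where f: "\<And>n. f n \<in> A - {1}" "f \<longlonglongrightarrow> 1" using True islimpt_sequential by blast
    have "f n \<in> {0..1}" for n using f(1)[of n] A01 by blast
    have "\<exists>n. homotopic_paths S (sp 1 (f n) \<alpha>) (sp 1 (f n) \<beta>)"
      by (rule loops_lemma[OF pa pb _ _ _ _ f(2) naw]) (use f A01 eqA A1 \<open>\<And>n. f n \<in> {0..1}\<close> in auto)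
    then obtain n where hn0: "homotopic_paths S (sp 1 (f n) \<alpha>) (sp 1 (f n) \<beta>)" by blast
    have hn: "homotopic_paths S (sp (f n) 1 \<alpha>) (sp (f n) 1 \<beta>)"
      using homotopic_paths_reversepath_D[OF hn0] by (simp add: reversepath_sp)
    have t: "f n \<in> A" "f n < 1" using f(1)[of n] A01 by force+
    have cs: "homotopy_cut_set S \<alpha> \<beta> (A - {f n<..<1})" by (rule cut_remove[OF H t(2) t(1) A1 hn])
    have iso: "isolated_point_of 1 (A - {f n<..<1})"
      unfolding isolated_point_of_def islimpt_approachable
    proof (intro conjI notI)
      show "1 \<in> A - {f n<..<1}" using A1 by auto
    next
      assume AS: "\<forall>e>0. \<exists>x'\<in>A - {f n<..<1}. x' \<noteq> 1 \<and> dist x' 1 < e"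
      have "1 - f n > 0" using t(2) by simp
      then obtain x' where x': "x' \<in> A - {f n<..<1}" "x' \<noteq> 1" "dist x' 1 < 1 - f n" using AS by blast
      have "x' \<le> 1" using x'(1) A01 by auto
      thus False using x' by (auto simp: dist_real_def)
    qed
    show ?thesis using cs iso by blast
  qed
qed

theorem mainTheorem12:
  fixes S :: "'a::topological_space set" and \<alpha> \<beta> :: "real \<Rightarrow> 'a" and x0 x1 :: 'a
  assumes "path \<alpha>" "path_image \<alpha> \<subseteq> S" "pathstart \<alpha> = x0" "pathfinish \<alpha> = x1"
      and "path \<beta>" "path_image \<beta> \<subseteq> S" "pathstart \<beta> = x0" "pathfinish \<beta> = x1"
      and "homotopy_cut_set S \<alpha> \<beta> A"
  shows "(x0 \<notin> aw S \<longrightarrow> (\<exists>B\<subseteq>A. homotopy_cut_set S \<alpha> \<beta> B \<and> isolated_point_of 0 B))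
       \<and> (x1 \<notin> aw S \<longrightarrow> (\<exists>B\<subseteq>A. homotopy_cut_set S \<alpha> \<beta> B \<and> isolated_point_of 1 B))
       \<and> (x0 \<notin> aw S \<and> x1 \<notin> aw S \<longrightarrow>
            (\<exists>B\<subseteq>A. homotopy_cut_set S \<alpha> \<beta> B \<and> isolated_point_of 0 B \<and> isolated_point_of 1 B))"
proof -
  have a0: "\<alpha> 0 = x0" using assms(3) by (simp add: pathstart_def)
  have a1: "\<alpha> 1 = x1" using assms(4) by (simp add: pathfinish_def)
  have c0: "\<exists>B\<subseteq>A. homotopy_cut_set S \<alpha> \<beta> B \<and> isolated_point_of 0 B" if n0: "x0 \<notin> aw S"
  proof -
    have "\<alpha> 0 \<notin> aw S" using n0 a0 by simp
    then show ?thesis using cut_zero[OF assms(1) assms(2) assms(5) assms(6) assms(9)] by blast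
  qed
  have c1: "\<exists>B\<subseteq>C. homotopy_cut_set S \<alpha> \<beta> B \<and> isolated_point_of 1 B"
    if n1: "x1 \<notin> aw S" and HC: "homotopy_cut_set S \<alpha> \<beta> C" for C
  proof -
    have "\<alpha> 1 \<notin> aw S" using n1 a1 by simp
    then show ?thesis using cut_one[OF assms(1) assms(2) assms(5) assms(6) HC] by blast
  qed
  have c01: "\<exists>B\<subseteq>A. homotopy_cut_set S \<alpha> \<beta> B \<and> isolated_point_of 0 B \<and> isolated_point_of 1 B"
    if n0: "x0 \<notin> aw S" and n1: "x1 \<notin> aw S"
  proof -
    obtain B1 where B1: "B1 \<subseteq> A" "homotopy_cut_set S \<alpha> \<beta> B1" "isolated_point_of 0 B1"
      using c0[OF n0] by blast
    obtain B2 where B2: "B2 \<subseteq> B1" "homotopy_cut_set S \<alpha> \<beta> B2" "isolated_point_of 1 B2"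
      using c1[OF n1 B1(2)] by blast
    have "{0,1} \<subseteq> B2" using B2(2) unfolding homotopy_cut_set_def by (elim conjE)
    hence z: "0 \<in> B2" by simp
    have "\<not> 0 islimpt B1" using B1(3) unfolding isolated_point_of_def by simp
    hence "\<not> 0 islimpt B2" using islimpt_subset[of 0 B2 B1] B2(1) by blast
    hence "isolated_point_of 0 B2" using z unfolding isolated_point_of_def by blast
    thus ?thesis using B1(1) B2 by blast
  qed
  show ?thesis using c0 c1[OF _ assms(9)] c01 by blast
qed

end
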